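(* Let $n\ge3$, let $A_n\le S_n$ be the alternating group and $\iota_n:A_n\hookrightarrow S_n$ the inclusion. Then $$|\mathsf{Desc}^1(\mathsf T^l_{\iota_n},(A_n,m_{A_n}))|=\begin{cases}1,& n=3,\\ k,& n\in\{4k,4k+1\}\ (k\ge1),\\ k+1,& n\in\{4k+2,4k+3\}\ (k\ge1).\end{cases}$$ (Equivalently, this is the number of conjugacy classes of complements to $A_n$ in $S_n$, which are the subgroups $\{1,\sigma\}$ with $\sigma$ a product of an odd number of disjoint transpositions.)
   Context: For a subgroup $B$ of a group $A$ with inclusion $\imath$, $\mathcal Z^1(\mathsf T^l_{\imath},(B,m_B))$ is identified with the set of maps $q:A\to B$ satisfying (ZL1) $q(1)=1$; (ZL2) $q(ba)=b\,q(a)$ for $b\in B,a\in A$; (ZL3) $q(aa')=q(a\,q(a'))$ for $a,a'\in A$ (the algebra structures on the left $B$-set $B$ for the monad $A\otimes_B-$ on left $B$-sets), and $\mathsf{Desc}^1(\mathsf T^l_{\imath},(B,m_B))$ is its quotient by $q\sim q'$ iff there is $b_0\in B$ with $q(a)b_0=q'(ab_0)$ for all $a\in A$. *)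

theory Defs
  imports "HOL-Algebra.Sym_Groups"
begin

definition Z1_incl :: "('a, 'm) monoid_scheme \<Rightarrow> 'a set \<Rightarrow> ('a \<Rightarrow> 'a) set" where
  "Z1_incl A B = {q. q \<in> carrier A \<rightarrow>\<^sub>E B
      \<and> q \<one>\<^bsub>A\<^esub> = \<one>\<^bsub>A\<^esub>
      \<and> (\<forall>b\<in>B. \<forall>a\<in>carrier A. q (b \<otimes>\<^bsub>A\<^esub> a) = b \<otimes>\<^bsub>A\<^esub> q a)
      \<and> (\<forall>a\<in>carrier A. \<forall>a'\<in>carrier A. q (a \<otimes>\<^bsub>A\<^esub> a') = q (a \<otimes>\<^bsub>A\<^esub> q a'))}"

definition Desc_rel :: "('a, 'm) monoid_scheme \<Rightarrow> 'a set \<Rightarrow> (('a \<Rightarrow> 'a) \<times> ('a \<Rightarrow> 'a)) set" where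
  "Desc_rel A B = {(q, q'). q \<in> Z1_incl A B \<and> q' \<in> Z1_incl A B
      \<and> (\<exists>b0\<in>B. \<forall>a\<in>carrier A. q a \<otimes>\<^bsub>A\<^esub> b0 = q' (a \<otimes>\<^bsub>A\<^esub> b0))}"

definition Desc1_incl :: "('a, 'm) monoid_scheme \<Rightarrow> 'a set \<Rightarrow> ('a \<Rightarrow> 'a) set set" where
  "Desc1_incl A B = Z1_incl A B // Desc_rel A B"

end

theory Submission
  imports Defs
begin

definition isupp :: "('a \<Rightarrow> 'a) \<Rightarrow> 'a set" where "isupp s = {z. s z \<noteq> z}"
definition rmv :: "('a \<Rightarrow> 'a) \<Rightarrow> 'a \<Rightarrow> 'a \<Rightarrow> 'a" where "rmv s x = Transposition.transpose x (s x) \<circ> s"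

lemma rmv_apply: "\<forall>z. s (s z) = z \<Longrightarrow> rmv s x z = (if z = x \<or> z = s x then z else s z)"
  unfolding rmv_def transpose_def by (auto, metis+)

lemma rmv_invol: "\<forall>z. s (s z) = z \<Longrightarrow> \<forall>z. rmv s x (rmv s x z) = z"
  by (auto simp: rmv_apply) (metis)+

lemma rmv_supp: "\<forall>z. s (s z) = z \<Longrightarrow> isupp (rmv s x) = isupp s - {x, s x}"
  by (auto simp: rmv_apply isupp_def)

lemma rmv_comp: "\<forall>z. s (s z) = z \<Longrightarrow> Transposition.transpose x (s x) \<circ> rmv s x = s"
  unfolding rmv_def by (simp add: fun_eq_iff)

lemma invol_permutes:
  assumes "\<forall>z. s (s z) = z" "isupp s \<subseteq> S" shows "s permutes S"
proof (rule bij_imp_permutes)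
  show "bij_betw s S S"
    unfolding bij_betw_def
  proof
    show "inj_on s S" by (rule inj_onI) (metis assms(1))
    show "s ` S = S"
    proof
      have *: "z \<in> S \<Longrightarrow> s z \<in> S" for z
      proof (cases "s z = z")
        case False
        then have "s z \<in> isupp s" using assms(1) unfolding isupp_def by simp
        then show ?thesis using assms(2) by blast
      qed simp
      show "s ` S \<subseteq> S" using * by blast
      show "S \<subseteq> s ` S"
      proof
        fix z assume "z \<in> S"
        then have "s (s z) = z" "s z \<in> S" using assms(1) * by auto
        then show "z \<in> s ` S" by (metis image_eqI)
      qed
    qed
  qed
  show "\<And>x. x \<notin> S \<Longrightarrow> s x = x" using assms unfolding isupp_def by auto
qed

lemma permutes_isupp: "s permutes S \<Longrightarrow> isupp s \<subseteq> S"
  unfolding isupp_def permutes_def by auto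

lemma invol_sign:
  "finite (isupp s) \<Longrightarrow> \<forall>z. s (s z) = z \<Longrightarrow>
     even (card (isupp s)) \<and> (evenperm s \<longleftrightarrow> even (card (isupp s) div 2))"
proof (induction "card (isupp s)" arbitrary: s rule: less_induct)
  case less
  show ?case
  proof (cases "isupp s = {}")
    case True
    then have "s = id" unfolding isupp_def by auto
    then show ?thesis using True by simp
  next
    case False
    then obtain x where x: "x \<in> isupp s" by blast
    then have sx: "s x \<noteq> x" "s x \<in> isupp s" using less.prems unfolding isupp_def by auto
    define s1 where "s1 = rmv s x"
    have s1i: "\<forall>z. s1 (s1 z) = z" unfolding s1_def by (rule rmv_invol[OF less.prems(2)])
    have sup1: "isupp s1 = isupp s - {x, s x}" unfolding s1_def by (rule rmv_supp[OF less.prems(2)])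
    have c1: "card (isupp s1) = card (isupp s) - 2"
      using sup1 x sx less.prems by (simp add: card_Diff_subset)
    have c2: "card (isupp s) \<ge> 2"
    proof -
      have "{x, s x} \<subseteq> isupp s" using x sx by auto
      then have "card {x, s x} \<le> card (isupp s)" by (rule card_mono[OF less.prems(1)])
      then show ?thesis using sx by simp
    qed
    have f1: "finite (isupp s1)" using sup1 less.prems by simp
    have lt: "card (isupp s1) < card (isupp s)" using c1 c2 by simp
    have IH: "even (card (isupp s1)) \<and> (evenperm s1 \<longleftrightarrow> even (card (isupp s1) div 2))"
      by (rule less.hyps[OF lt f1 s1i])
    have "s1 permutes isupp s1" by (rule invol_permutes[OF s1i]) simp
    then have p1: "permutation s1" using f1 permutation_permutes by blast
    have eq: "s = Transposition.transpose x (s x) \<circ> s1" unfolding s1_def by (rule rmv_comp[symmetric, OF less.prems(2)])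
    have "evenperm (Transposition.transpose x (s x) \<circ> s1) = (evenperm (Transposition.transpose x (s x)) = evenperm s1)"
      by (rule evenperm_comp[OF permutation_swap_id p1])
    then have "evenperm s = (\<not> evenperm s1)"
      using eq evenperm_swap[of x "s x"] sx(1) by auto
    moreover have "card (isupp s) = card (isupp s1) + 2" using c1 c2 by simp
    ultimately show ?thesis using IH by auto
  qed
qed

lemma invol_conj_gen:
  assumes "finite S" "finite S'" "card S = card S'"
    "\<forall>z. s (s z) = z" "\<forall>z. s' (s' z) = z" "isupp s \<subseteq> S" "isupp s' \<subseteq> S'"
    "card (isupp s) = card (isupp s')"
  shows "\<exists>p. bij_betw p S S' \<and> (\<forall>z\<in>S. p (s z) = s' (p z))"
  using assms
proof (induction "card (isupp s)" arbitrary: S S' s s' rule: less_induct)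
  case less
  have fin: "finite (isupp s)" "finite (isupp s')"
    using less.prems finite_subset by blast+
  show ?case
  proof (cases "isupp s = {}")
    case True
    then have e: "isupp s' = {}" using less.prems(8) fin by simp
    have "\<forall>z. s z = z" "\<forall>z. s' z = z" using True e unfolding isupp_def by auto
    moreover obtain h where "bij_betw h S S'" using finite_same_card_bij less.prems(1-3) by blast
    ultimately show ?thesis by auto
  next
    case False
    then obtain x where x: "x \<in> isupp s" by blast
    then have sx: "s x \<noteq> x" "s x \<in> isupp s" using less.prems(4) unfolding isupp_def by auto
    have "isupp s' \<noteq> {}" using False less.prems(8) fin by auto
    then obtain y where y: "y \<in> isupp s'" by blast
    then have sy: "s' y \<noteq> y" "s' y \<in> isupp s'" using less.prems(5) unfolding isupp_def by auto
    define s1 where "s1 = rmv s x"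
    define s1' where "s1' = rmv s' y"
    define S0 where "S0 = S - {x, s x}"
    define S0' where "S0' = S' - {y, s' y}"
    have s1i: "\<forall>z. s1 (s1 z) = z" unfolding s1_def by (rule rmv_invol[OF less.prems(4)])
    have s1i': "\<forall>z. s1' (s1' z) = z" unfolding s1'_def by (rule rmv_invol[OF less.prems(5)])
    have sup1: "isupp s1 = isupp s - {x, s x}" unfolding s1_def by (rule rmv_supp[OF less.prems(4)])
    have sup1': "isupp s1' = isupp s' - {y, s' y}" unfolding s1'_def by (rule rmv_supp[OF less.prems(5)])
    have xS: "x \<in> S" "s x \<in> S" using x sx less.prems(6) by auto
    have yS: "y \<in> S'" "s' y \<in> S'" using y sy less.prems(7) by auto
    have c1: "card (isupp s1) = card (isupp s) - 2"
      using sup1 x sx fin by (simp add: card_Diff_subset)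
    have c1': "card (isupp s1') = card (isupp s') - 2"
      using sup1' y sy fin by (simp add: card_Diff_subset)
    have cS: "card S0 = card S - 2" unfolding S0_def
      using xS sx less.prems(1) by (simp add: card_Diff_subset)
    have cS': "card S0' = card S' - 2" unfolding S0'_def
      using yS sy less.prems(2) by (simp add: card_Diff_subset)
    have "card (isupp s) > 0" using fin(1) x card_gt_0_iff by blast
    then have lt: "card (isupp s1) < card (isupp s)" using c1 by linarith
    have "\<exists>p. bij_betw p S0 S0' \<and> (\<forall>z\<in>S0. p (s1 z) = s1' (p z))"
      apply (rule less.hyps[OF lt])
      using less.prems cS cS' sup1 sup1' c1 c1' s1i s1i' unfolding S0_def S0'_def by auto
    then obtain p1 where p1: "bij_betw p1 S0 S0'" "\<forall>z\<in>S0. p1 (s1 z) = s1' (p1 z)" by blast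
    define p where "p = p1(x := y, s x := s' y)"
    have "bij_betw p S0 S0'"
      using p1(1) by (subst bij_betw_cong[where g=p1]) (auto simp: p_def S0_def)
    moreover have "bij_betw p {x, s x} {y, s' y}"
      using sx sy unfolding bij_betw_def p_def by (auto simp: inj_on_def)
    moreover have "S0' \<inter> {y, s' y} = {}" unfolding S0'_def by auto
    ultimately have "bij_betw p (S0 \<union> {x, s x}) (S0' \<union> {y, s' y})" by (rule bij_betw_combine)
    moreover have "S0 \<union> {x, s x} = S" "S0' \<union> {y, s' y} = S'" using xS yS unfolding S0_def S0'_def by auto
    ultimately have bij: "bij_betw p S S'" by simp
    have "p (s z) = s' (p z)" if z: "z \<in> S" for z
    proof -
      have ssx: "s (s x) = x" using less.prems(4) by simp
      have ssy: "s' (s' y) = y" using less.prems(5) by simp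
      consider "z = x" | "z = s x" | "z \<in> S0" using z unfolding S0_def by blast
      then show ?thesis
      proof cases
        case 1 then show ?thesis using sx sy ssx ssy by (simp add: p_def)
      next
        case 2 then show ?thesis using sx sy ssx ssy by (simp add: p_def)
      next
        case 3
        then have zz: "z \<noteq> x" "z \<noteq> s x" unfolding S0_def by auto
        have szx: "s z \<noteq> x" "s z \<noteq> s x" using zz less.prems(4) by metis+
        have s1z: "s1 z = s z" unfolding s1_def using rmv_apply[OF less.prems(4)] zz by simp
        have pz: "p z = p1 z" "p (s z) = p1 (s z)" using zz szx by (auto simp: p_def)
        have "p1 z \<in> S0'" using p1(1) 3 bij_betwE by blast
        then have pzz: "p1 z \<noteq> y" "p1 z \<noteq> s' y" unfolding S0'_def by auto
        have "s1' (p1 z) = s' (p1 z)" unfolding s1'_def using rmv_apply[OF less.prems(5)] pzz by simp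
        then show ?thesis using p1(2) 3 s1z pz by metis
      qed
    qed
    then show ?thesis using bij by blast
  qed
qed

lemma cG: "carrier (sym_group n) = {p. p permutes {1..n}}" by (simp add: sym_group_def)
lemma mG: "x \<otimes>\<^bsub>sym_group n\<^esub> y = x \<circ> y" by (simp add: sym_group_def)
lemma oG: "\<one>\<^bsub>sym_group n\<^esub> = id" by (simp add: sym_group_def)
lemma cH: "carrier (alt_group n) = {p. p permutes {1..n} \<and> evenperm p}"
  by (simp add: alt_group_def sym_group_def)

lemma ep: fixes n :: nat shows "a permutes {1..n} \<Longrightarrow> b permutes {1..n} \<Longrightarrow> evenperm (a \<circ> b) = (evenperm a = evenperm b)"
proof -
  have pp: "permutation c" if "c permutes {1..n}" for c :: "nat \<Rightarrow> nat"
    unfolding permutation_permutes using that by (intro exI[of _ "{1..n}"]) simp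
  assume "a permutes {1..n}" "b permutes {1..n}"
  then show ?thesis by (intro evenperm_comp pp)
qed

lemma pc: fixes n :: nat shows "a permutes {1..n} \<Longrightarrow> b permutes {1..n} \<Longrightarrow> a \<circ> b permutes {1..n}"
  by (rule permutes_compose)

definition Inv :: "nat \<Rightarrow> (nat \<Rightarrow> nat) set" where
  "Inv n = {s. s permutes {1..n} \<and> (\<forall>z. s (s z) = z) \<and> \<not> evenperm s}"

definition qf :: "nat \<Rightarrow> (nat \<Rightarrow> nat) \<Rightarrow> (nat \<Rightarrow> nat) \<Rightarrow> (nat \<Rightarrow> nat)" where
  "qf n s = (\<lambda>a. if a permutes {1..n} then (if evenperm a then a else a \<circ> s) else undefined)"

lemma qf_Z1:
  assumes s: "s \<in> Inv n"
  shows "qf n s \<in> Z1_incl (sym_group n) (carrier (alt_group n))"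
proof -
  have sp: "s permutes {1..n}" and si: "\<forall>z. s (s z) = z" and so: "\<not> evenperm s"
    using s by (auto simp: Inv_def)
  have q_ev: "qf n s a = a" if "a permutes {1..n}" "evenperm a" for a
    using that by (simp add: qf_def)
  have q_od: "qf n s a = a \<circ> s" if "a permutes {1..n}" "\<not> evenperm a" for a
    using that by (simp add: qf_def)
  have qH: "qf n s a permutes {1..n} \<and> evenperm (qf n s a)" if a: "a permutes {1..n}" for a
  proof (cases "evenperm a")
    case True then show ?thesis using a q_ev[OF a True] by simp
  next
    case False then show ?thesis using q_od[OF a False] pc[OF a sp] ep[OF a sp] so False by simp
  qed
  have PiE: "qf n s \<in> carrier (sym_group n) \<rightarrow>\<^sub>E carrier (alt_group n)"
  proof (rule PiE_I)
    fix a assume "a \<in> carrier (sym_group n)"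
    then show "qf n s a \<in> carrier (alt_group n)" using qH unfolding cG cH by blast
  next
    fix a assume "a \<notin> carrier (sym_group n)"
    then show "qf n s a = undefined" unfolding cG qf_def by simp
  qed
  have one: "qf n s id = id" using q_ev[of id] by (simp add: permutes_id)
  have ZL2: "qf n s (b \<circ> a) = b \<circ> qf n s a" if b: "b permutes {1..n}" "evenperm b" and a: "a permutes {1..n}" for a b
  proof (cases "evenperm a")
    case True
    then show ?thesis using q_ev[OF pc[OF b(1) a]] ep[OF b(1) a] b q_ev[OF a] by simp
  next
    case False
    then show ?thesis using q_od[OF pc[OF b(1) a]] ep[OF b(1) a] b q_od[OF a] by (simp add: o_assoc)
  qed
  have ZL3: "qf n s (a \<circ> a') = qf n s (a \<circ> qf n s a')" if a: "a permutes {1..n}" and a': "a' permutes {1..n}" for a a'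
  proof (cases "evenperm a'")
    case True then show ?thesis using q_ev[OF a'] by simp
  next
    case False
    have qa': "qf n s a' = a' \<circ> s" using q_od[OF a' False] .
    have p1: "a \<circ> a' permutes {1..n}" using pc[OF a a'] .
    have p2: "a \<circ> (a' \<circ> s) permutes {1..n}" using pc[OF a pc[OF a' sp]] .
    have e1: "evenperm (a \<circ> a') = (\<not> evenperm a)" using ep[OF a a'] False by simp
    have e2: "evenperm (a \<circ> (a' \<circ> s)) = evenperm a"
      using ep[OF a pc[OF a' sp]] ep[OF a' sp] False so by simp
    show ?thesis
    proof (cases "evenperm a")
      case True
      then show ?thesis using qa' q_od[OF p1] q_ev[OF p2] e1 e2 by (simp add: o_assoc)
    next
      case False
      have l: "qf n s (a \<circ> a') = a \<circ> a'" using q_ev[OF p1] e1 False by simp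
      have r: "qf n s (a \<circ> (a' \<circ> s)) = a \<circ> (a' \<circ> s) \<circ> s" using q_od[OF p2] e2 False by simp
      show ?thesis unfolding qa' l r using si by (simp add: fun_eq_iff)
    qed
  qed
  show ?thesis unfolding Z1_incl_def mG oG
  proof (intro CollectI conjI ballI)
    show "qf n s \<in> carrier (sym_group n) \<rightarrow>\<^sub>E carrier (alt_group n)" by (rule PiE)
    show "qf n s id = id" by (rule one)
  next
    fix b a assume "b \<in> carrier (alt_group n)" "a \<in> carrier (sym_group n)"
    then show "qf n s (b \<circ> a) = b \<circ> qf n s a" unfolding cG cH using ZL2 by simp
  next
    fix a a' assume "a \<in> carrier (sym_group n)" "a' \<in> carrier (sym_group n)"
    then show "qf n s (a \<circ> a') = qf n s (a \<circ> qf n s a')" unfolding cG using ZL3 by simp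
  qed
qed

lemma Z1_sub:
  assumes n: "n \<ge> 2" and q: "q \<in> Z1_incl (sym_group n) (carrier (alt_group n))"
  shows "q \<in> qf n ` Inv n"
proof -
  have qPi: "q \<in> carrier (sym_group n) \<rightarrow>\<^sub>E carrier (alt_group n)"
    and q1: "q id = id"
    and q2: "\<And>b a. b \<in> carrier (alt_group n) \<Longrightarrow> a \<in> carrier (sym_group n) \<Longrightarrow> q (b \<circ> a) = b \<circ> q a"
    and q3: "\<And>a a'. a \<in> carrier (sym_group n) \<Longrightarrow> a' \<in> carrier (sym_group n) \<Longrightarrow> q (a \<circ> a') = q (a \<circ> q a')"
    using q unfolding Z1_incl_def mG oG by auto
  have qH: "q a permutes {1..n} \<and> evenperm (q a)" if "a permutes {1..n}" for a
    using qPi that unfolding cG cH by auto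
  define t where "t = Transposition.transpose (1::nat) 2"
  have tp: "t permutes {1..n}" unfolding t_def using n by (intro permutes_swap_id) auto
  have te: "\<not> evenperm t" unfolding t_def by (simp add: evenperm_swap)
  have tt: "t \<circ> t = id" unfolding t_def by simp
  define c where "c = q t"
  have cp: "c permutes {1..n}" and ce: "evenperm c" using qH[OF tp] c_def by auto
  define s where "s = t \<circ> c"
  have sp: "s permutes {1..n}" unfolding s_def by (rule pc[OF tp cp])
  have so: "\<not> evenperm s" unfolding s_def using ep[OF tp cp] te ce by simp
  have q_ev: "q a = a" if a: "a permutes {1..n}" "evenperm a" for a
  proof -
    have "q (a \<circ> id) = a \<circ> q id" using q2[of a id] a unfolding cG cH by (simp add: permutes_id)
    then show ?thesis using q1 by simp
  qed
  have q_od: "q a = a \<circ> s" if a: "a permutes {1..n}" "\<not> evenperm a" for a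
  proof -
    have at: "a \<circ> t permutes {1..n}" "evenperm (a \<circ> t)" using pc[OF a(1) tp] ep[OF a(1) tp] a(2) te by auto
    have "q ((a \<circ> t) \<circ> t) = (a \<circ> t) \<circ> q t" using q2[of "a \<circ> t" t] at tp unfolding cG cH by simp
    moreover have "(a \<circ> t) \<circ> t = a" using tt by (simp add: o_assoc[symmetric])
    ultimately show ?thesis unfolding s_def c_def by (simp add: o_assoc)
  qed
  have si: "s \<circ> s = id"
  proof -
    have "q (t \<circ> t) = q (t \<circ> q t)" using q3[of t t] tp unfolding cG by simp
    then have "id = q (t \<circ> c)" using tt q1 c_def by simp
    also have "q (t \<circ> c) = s \<circ> s" using q_od[OF sp so] s_def by simp
    finally show ?thesis by simp
  qed
  have sI: "s \<in> Inv n" unfolding Inv_def using sp so si by (simp add: fun_eq_iff)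
  have "q = qf n s"
  proof
    fix a show "q a = qf n s a"
    proof (cases "a permutes {1..n}")
      case True then show ?thesis using q_ev q_od unfolding qf_def by auto
    next
      case False then show ?thesis using qPi unfolding qf_def cG by (auto simp: PiE_def extensional_def)
    qed
  qed
  then show ?thesis using sI by blast
qed

lemma transp_comm:
  assumes "\<forall>z. s (s z) = z"
  shows "Transposition.transpose y (s y) (s z) = s (Transposition.transpose y (s y) z)"
  using assms unfolding transpose_def by (cases "z = y"; cases "z = s y") (auto, metis+)

lemma conj_even:
  assumes s: "s \<in> Inv n" and s': "s' \<in> Inv n" and c: "card (isupp s) = card (isupp s')"
  shows "\<exists>b0. b0 permutes {1..n} \<and> evenperm b0 \<and> (\<forall>z. b0 (s' z) = s (b0 z))"
proof -
  have sp: "s permutes {1..n}" and si: "\<forall>z. s (s z) = z" and so: "\<not> evenperm s"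
    using s by (auto simp: Inv_def)
  have sp': "s' permutes {1..n}" and si': "\<forall>z. s' (s' z) = z" and so': "\<not> evenperm s'"
    using s' by (auto simp: Inv_def)
  obtain p where p: "bij_betw p {1..n} {1..n}" "\<forall>z\<in>{1..n}. p (s' z) = s (p z)"
    using invol_conj_gen[of "{1..n}" "{1..n}" s' s] si si' permutes_isupp[OF sp] permutes_isupp[OF sp'] c
    by auto
  define p2 where "p2 = (\<lambda>z. if z \<in> {1..n} then p z else z)"
  have "bij_betw p2 {1..n} {1..n}" using p(1) by (subst bij_betw_cong[where g=p]) (auto simp: p2_def)
  then have p2p: "p2 permutes {1..n}" by (rule bij_imp_permutes) (auto simp: p2_def)
  have p2c: "p2 (s' z) = s (p2 z)" for z
  proof (cases "z \<in> {1..n}")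
    case True
    then have "s' z \<in> {1..n}" using permutes_in_image[OF sp'] by blast
    moreover have "p z \<in> {1..n}" using True p(1) bij_betwE by blast
    ultimately show ?thesis using True p(2) by (simp add: p2_def)
  next
    case False
    then show ?thesis using permutes_not_in[OF sp' False] permutes_not_in[OF sp False] by (auto simp: p2_def)
  qed
  show ?thesis
  proof (cases "evenperm p2")
    case True then show ?thesis using p2p p2c by blast
  next
    case False
    have "isupp s' \<noteq> {}"
    proof
      assume "isupp s' = {}"
      then have "s' = id" unfolding isupp_def by auto
      then show False using so' by simp
    qed
    then obtain y where y: "y \<in> isupp s'" by blast
    then have yy: "s' y \<noteq> y" "s' y \<in> isupp s'" using si' unfolding isupp_def by auto
    have yS: "y \<in> {1..n}" "s' y \<in> {1..n}" using y yy permutes_isupp[OF sp'] by auto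
    define t where "t = Transposition.transpose y (s' y)"
    have tp: "t permutes {1..n}" unfolding t_def using yS by (rule permutes_swap_id)
    have te: "\<not> evenperm t" unfolding t_def using yy(1) evenperm_swap[of y "s' y"] by auto
    have b0p: "p2 \<circ> t permutes {1..n}" by (rule pc[OF p2p tp])
    have b0e: "evenperm (p2 \<circ> t)" using ep[OF p2p tp] False te by simp
    have "(p2 \<circ> t) (s' z) = s ((p2 \<circ> t) z)" for z
      using transp_comm[OF si', of y z] p2c unfolding t_def by simp
    then show ?thesis using b0p b0e by blast
  qed
qed

lemma rel_iff:
  assumes s: "s \<in> Inv n" and s': "s' \<in> Inv n"
  shows "(qf n s, qf n s') \<in> Desc_rel (sym_group n) (carrier (alt_group n)) \<longleftrightarrow> card (isupp s) = card (isupp s')"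
proof -
  have sp: "s permutes {1..n}" and si: "\<forall>z. s (s z) = z" and so: "\<not> evenperm s"
    using s by (auto simp: Inv_def)
  have sp': "s' permutes {1..n}" and si': "\<forall>z. s' (s' z) = z" and so': "\<not> evenperm s'"
    using s' by (auto simp: Inv_def)
  have "(qf n s, qf n s') \<in> Desc_rel (sym_group n) (carrier (alt_group n)) \<longleftrightarrow>
     (\<exists>b0. b0 permutes {1..n} \<and> evenperm b0 \<and> (\<forall>a. a permutes {1..n} \<longrightarrow> qf n s a \<circ> b0 = qf n s' (a \<circ> b0)))"
    unfolding Desc_rel_def using qf_Z1[OF s] qf_Z1[OF s'] by (auto simp: cG cH mG)
  also have "\<dots> \<longleftrightarrow> card (isupp s) = card (isupp s')"
  proof
    assume "\<exists>b0. b0 permutes {1..n} \<and> evenperm b0 \<and> (\<forall>a. a permutes {1..n} \<longrightarrow> qf n s a \<circ> b0 = qf n s' (a \<circ> b0))"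
    then obtain b0 where b: "b0 permutes {1..n}" "evenperm b0" "\<forall>a. a permutes {1..n} \<longrightarrow> qf n s a \<circ> b0 = qf n s' (a \<circ> b0)"
      by blast
    have "qf n s s \<circ> b0 = qf n s' (s \<circ> b0)" using b(3) sp by blast
    moreover have "qf n s s = s \<circ> s" using sp so by (simp add: qf_def)
    moreover have "qf n s' (s \<circ> b0) = s \<circ> b0 \<circ> s'"
      using pc[OF sp b(1)] ep[OF sp b(1)] so b(2) by (simp add: qf_def)
    ultimately have "s \<circ> s \<circ> b0 = s \<circ> b0 \<circ> s'" by simp
    then have "s (s (b0 z)) = s (b0 (s' z))" for z by (metis comp_apply)
    then have com: "s (b0 z) = b0 (s' z)" for z using si by metis
    have inj: "inj b0" using b(1) by (rule permutes_inj)
    have sur: "surj b0" using b(1) by (rule permutes_surj)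
    have "b0 ` isupp s' = isupp s"
    proof
      show "b0 ` isupp s' \<subseteq> isupp s"
        unfolding isupp_def using com inj by (auto dest: injD)
      show "isupp s \<subseteq> b0 ` isupp s'"
      proof
        fix w assume w: "w \<in> isupp s"
        obtain z where z: "w = b0 z" using sur by (metis surjD)
        then have "b0 (s' z) \<noteq> b0 z" using w com unfolding isupp_def by auto
        then have "z \<in> isupp s'" unfolding isupp_def by auto
        then show "w \<in> b0 ` isupp s'" using z by blast
      qed
    qed
    then show "card (isupp s) = card (isupp s')"
      using card_image[OF inj_on_subset[OF inj subset_UNIV]] by metis
  next
    assume "card (isupp s) = card (isupp s')"
    then obtain b0 where b: "b0 permutes {1..n}" "evenperm b0" "\<forall>z. b0 (s' z) = s (b0 z)"
      using conj_even[OF s s'] by blast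
    have "qf n s a \<circ> b0 = qf n s' (a \<circ> b0)" if a: "a permutes {1..n}" for a
    proof (cases "evenperm a")
      case True then show ?thesis using a pc[OF a b(1)] ep[OF a b(1)] b(2) by (simp add: qf_def)
    next
      case False then show ?thesis using a pc[OF a b(1)] ep[OF a b(1)] b(2) b(3) by (simp add: qf_def fun_eq_iff)
    qed
    then show "\<exists>b0. b0 permutes {1..n} \<and> evenperm b0 \<and> (\<forall>a. a permutes {1..n} \<longrightarrow> qf n s a \<circ> b0 = qf n s' (a \<circ> b0))"
      using b by blast
  qed
  finally show ?thesis .
qed

lemma Z1_eq: "n \<ge> 2 \<Longrightarrow> Z1_incl (sym_group n) (carrier (alt_group n)) = qf n ` Inv n"
  using Z1_sub qf_Z1 by blast

definition Cl :: "nat \<Rightarrow> nat \<Rightarrow> ((nat \<Rightarrow> nat) \<Rightarrow> (nat \<Rightarrow> nat)) set" where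
  "Cl n m = qf n ` {s \<in> Inv n. card (isupp s) = m}"

lemma class_eq:
  assumes n: "n \<ge> 2" and s: "s \<in> Inv n"
  shows "Desc_rel (sym_group n) (carrier (alt_group n)) `` {qf n s} = Cl n (card (isupp s))"
proof
  show "Desc_rel (sym_group n) (carrier (alt_group n)) `` {qf n s} \<subseteq> Cl n (card (isupp s))"
  proof
    fix q assume "q \<in> Desc_rel (sym_group n) (carrier (alt_group n)) `` {qf n s}"
    then have r: "(qf n s, q) \<in> Desc_rel (sym_group n) (carrier (alt_group n))" by simp
    then have "q \<in> Z1_incl (sym_group n) (carrier (alt_group n))" unfolding Desc_rel_def by simp
    then obtain s' where s': "s' \<in> Inv n" "q = qf n s'" using Z1_eq[OF n] by blast
    then have "card (isupp s) = card (isupp s')" using rel_iff[OF s s'(1)] r by simp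
    then show "q \<in> Cl n (card (isupp s))" unfolding Cl_def using s' by auto
  qed
  show "Cl n (card (isupp s)) \<subseteq> Desc_rel (sym_group n) (carrier (alt_group n)) `` {qf n s}"
  proof
    fix q assume "q \<in> Cl n (card (isupp s))"
    then obtain s' where s': "s' \<in> Inv n" "card (isupp s') = card (isupp s)" "q = qf n s'"
      unfolding Cl_def by auto
    then show "q \<in> Desc_rel (sym_group n) (carrier (alt_group n)) `` {qf n s}"
      using rel_iff[OF s s'(1)] by simp
  qed
qed

lemma Desc_eq:
  assumes n: "n \<ge> 2"
  shows "Desc1_incl (sym_group n) (carrier (alt_group n)) = Cl n ` ((\<lambda>s. card (isupp s)) ` Inv n)"
proof -
  have "Desc1_incl (sym_group n) (carrier (alt_group n)) =
      (\<Union>x\<in>qf n ` Inv n. {Desc_rel (sym_group n) (carrier (alt_group n)) `` {x}})"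
    unfolding Desc1_incl_def quotient_def Z1_eq[OF n] by simp
  also have "\<dots> = (\<Union>s\<in>Inv n. {Cl n (card (isupp s))})" using class_eq[OF n] by simp
  also have "\<dots> = Cl n ` ((\<lambda>s. card (isupp s)) ` Inv n)" by blast
  finally show ?thesis .
qed

lemma qf_inj: assumes "s \<in> Inv n" "s' \<in> Inv n" "qf n s = qf n s'" shows "s = s'"
proof -
  have sp: "s permutes {1..n}" and si: "\<forall>z. s (s z) = z" and so: "\<not> evenperm s"
    using assms(1) by (auto simp: Inv_def)
  have "qf n s s = s \<circ> s" "qf n s' s = s \<circ> s'" using sp so by (auto simp: qf_def)
  then have "s \<circ> s = s \<circ> s'" using assms(3) by simp
  then have "s (s z) = s (s' z)" for z by (metis comp_apply)
  then have "s z = s' z" for z using si by metis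
  then show ?thesis by blast
qed

lemma Cl_inj: "inj_on (Cl n) ((\<lambda>s. card (isupp s)) ` Inv n)"
proof (rule inj_onI)
  fix m1 m2 assume m1: "m1 \<in> (\<lambda>s. card (isupp s)) ` Inv n" and m2: "m2 \<in> (\<lambda>s. card (isupp s)) ` Inv n"
    and e: "Cl n m1 = Cl n m2"
  obtain s1 where s1: "s1 \<in> Inv n" "m1 = card (isupp s1)" using m1 by blast
  then have "qf n s1 \<in> Cl n m1" unfolding Cl_def by auto
  then have "qf n s1 \<in> Cl n m2" using e by simp
  then obtain s2 where s2: "s2 \<in> Inv n" "card (isupp s2) = m2" "qf n s1 = qf n s2" unfolding Cl_def by auto
  then have "s1 = s2" using qf_inj s1 by blast
  then show "m1 = m2" using s1 s2 by simp
qed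

definition tj :: "nat \<Rightarrow> nat \<Rightarrow> nat" where
  "tj j z = (if 1 \<le> z \<and> z \<le> 2*j then (if odd z then z + 1 else z - 1) else z)"

lemma tj_invol: "\<forall>z. tj j (tj j z) = z"
proof
  fix z show "tj j (tj j z) = z"
  proof (cases "1 \<le> z \<and> z \<le> 2*j")
    case True
    show ?thesis
    proof (cases "odd z")
      case o: True
      then have "z + 1 \<le> 2*j" using True by presburger
      then show ?thesis using True o unfolding tj_def by auto
    next
      case e: False
      then have "z \<ge> 2" using True by presburger
      then show ?thesis using True e unfolding tj_def by auto
    qed
  qed (auto simp: tj_def)
qed

lemma tj_supp: "isupp (tj j) = {1..2*j}"
  unfolding isupp_def tj_def by auto

lemma M_eq: "(\<lambda>s. card (isupp s)) ` Inv n = (\<lambda>j. 2*j) ` {j. odd j \<and> 2*j \<le> n}"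
proof
  show "(\<lambda>s. card (isupp s)) ` Inv n \<subseteq> (\<lambda>j. 2*j) ` {j. odd j \<and> 2*j \<le> n}"
  proof
    fix m assume "m \<in> (\<lambda>s. card (isupp s)) ` Inv n"
    then obtain s where s: "s \<in> Inv n" "m = card (isupp s)" by blast
    have sp: "s permutes {1..n}" and si: "\<forall>z. s (s z) = z" and so: "\<not> evenperm s"
      using s by (auto simp: Inv_def)
    have sub: "isupp s \<subseteq> {1..n}" by (rule permutes_isupp[OF sp])
    then have fin: "finite (isupp s)" using finite_subset by blast
    have le: "m \<le> n" using card_mono[OF _ sub] s(2) by simp
    have "even m" "odd (m div 2)" using invol_sign[OF fin si] so s(2) by auto
    then show "m \<in> (\<lambda>j. 2*j) ` {j. odd j \<and> 2*j \<le> n}" using le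
      by (intro image_eqI[of _ _ "m div 2"]) auto
  qed
  show "(\<lambda>j. 2*j) ` {j. odd j \<and> 2*j \<le> n} \<subseteq> (\<lambda>s. card (isupp s)) ` Inv n"
  proof
    fix m assume "m \<in> (\<lambda>j. 2*j) ` {j. odd j \<and> 2*j \<le> n}"
    then obtain j where j: "odd j" "2*j \<le> n" "m = 2*j" by blast
    have perm: "tj j permutes {1..n}" using tj_invol[of j] tj_supp[of j] j(2)
      by (intro invol_permutes) auto
    have "even (card (isupp (tj j))) \<and> (evenperm (tj j) \<longleftrightarrow> even (card (isupp (tj j)) div 2))"
      using invol_sign[of "tj j"] tj_supp tj_invol by simp
    then have "\<not> evenperm (tj j)" using j(1) tj_supp by simp
    then have "tj j \<in> Inv n" unfolding Inv_def using perm tj_invol by blast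
    moreover have "m = card (isupp (tj j))" using tj_supp j by simp
    ultimately show "m \<in> (\<lambda>s. card (isupp s)) ` Inv n" by blast
  qed
qed

lemma count: "card {j::nat. odd j \<and> 2*j \<le> n} = (n + 2) div 4"
proof -
  have "{j::nat. odd j \<and> 2*j \<le> n} = (\<lambda>i. 2*i+1) ` {..<(n+2) div 4}"
  proof
    show "{j::nat. odd j \<and> 2*j \<le> n} \<subseteq> (\<lambda>i. 2*i+1) ` {..<(n+2) div 4}"
    proof
      fix j assume "j \<in> {j::nat. odd j \<and> 2*j \<le> n}"
      then have j: "odd j" "2*j \<le> n" by auto
      then obtain i where i: "j = 2*i+1" using oddE by blast
      then have "i < (n+2) div 4" using j(2) by linarith
      then show "j \<in> (\<lambda>i. 2*i+1) ` {..<(n+2) div 4}" using i by blast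
    qed
    show "(\<lambda>i. 2*i+1) ` {..<(n+2) div 4} \<subseteq> {j::nat. odd j \<and> 2*j \<le> n}"
      by auto
  qed
  moreover have "inj_on (\<lambda>i::nat. 2*i+1) {..<(n+2) div 4}" by (auto simp: inj_on_def)
  ultimately show ?thesis by (simp add: card_image)
qed

lemma card_Desc: "n \<ge> 2 \<Longrightarrow> card (Desc1_incl (sym_group n) (carrier (alt_group n))) = (n + 2) div 4"
proof -
  assume n: "n \<ge> 2"
  have "card (Desc1_incl (sym_group n) (carrier (alt_group n))) = card ((\<lambda>s. card (isupp s)) ` Inv n)"
    unfolding Desc_eq[OF n] by (rule card_image[OF Cl_inj])
  also have "\<dots> = card {j::nat. odd j \<and> 2*j \<le> n}"
    unfolding M_eq by (rule card_image) (auto simp: inj_on_def)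
  finally show ?thesis using count by simp
qed

theorem mainTheorem18:
  fixes n :: nat
  assumes "n \<ge> 3"
  shows "(n = 3 \<longrightarrow> card (Desc1_incl (sym_group n) (carrier (alt_group n))) = 1)
       \<and> (\<forall>k\<ge>1. (n = 4*k \<or> n = 4*k+1) \<longrightarrow> card (Desc1_incl (sym_group n) (carrier (alt_group n))) = k)
       \<and> (\<forall>k\<ge>1. (n = 4*k+2 \<or> n = 4*k+3) \<longrightarrow> card (Desc1_incl (sym_group n) (carrier (alt_group n))) = k+1)"
proof -
  have c: "card (Desc1_incl (sym_group n) (carrier (alt_group n))) = (n + 2) div 4"
    using assms by (intro card_Desc) simp
  show ?thesis unfolding c by auto
qed

end
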